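(* In the big-action setting below, assume $n\ge2$. Then: (1) for every $i\in\{1,\dots,n-1\}$, the map $\ell_{i,i+1}:V\to\mathbb F_p$ is $\mathbb F_p$-linear; (2) for every $i\in\{1,\dots,n-1\}$ such that $\ell_{i,i+1}$ is not identically zero, putting $\mathcal L_{i,i+1}(X)=\prod_{y\in\ker\ell_{i,i+1}}(X-y)$, there exists $\lambda_i\in k\setminus\{0\}$ such that $\ell_{i,i+1}(y)=\lambda_i\mathcal L_{i,i+1}(y)$ for all $y\in V$, and $V$ is exactly the set of roots in $k$ of $\lambda_i^p\mathcal L_{i,i+1}^p-\lambda_i\mathcal L_{i,i+1}$.
   Context: Big-action setting. Let $k$ be an algebraically closed field of characteristic $p>0$, $C$ a connected nonsingular projective curve over $k$ of genus $g\ge 2$, and $G$ a finite $p$-subgroup of $\mathrm{Aut}_k(C)$ with $|G|/g>2p/(p-1)$ (a "big action" $(C,G)$). It is known that there is a point $\infty\in C$ such that $G$ equals its own first (wild) ramification group at $\infty$, that $\infty$ is the only ramification point of $C\to C/G\cong\mathbb P^1_k$, that the second lower ramification group $G_2$ of $G$ at $\infty$ is a nontrivial proper subgroup of $G$ equal to the commutator subgroup $D(G)$, and that $C/G_2\cong\mathbb P^1_k$. Assume $G_2\cong(\mathbb Z/p\mathbb Z)^n$ with $n\ge1$. Put $L=k(C)$ and write $L^{G_2}=k(X)$, where $X$ is a coordinate on $C/G_2$ with pole at the image of $\infty$; then $G/G_2$ acts on $k(X)$ by translations $X\mapsto X+y$, $y$ ranging over an $\mathbb F_p$-subspace $V\subset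 k$ of dimension $v$, giving an exact sequence $0\to G_2\to G\to V\to 0$, $\sigma\mapsto\sigma(X)-X$. Let $\wp(Z)=Z^p-Z$. A polynomial in $k[X]$ is called reduced if it is a $k$-linear combination of monomials $X^j$ with $p\nmid j$; every $f\in k[X]$ is congruent modulo $\wp(k[X])$ to a unique reduced polynomial. Let $A=(\wp(L)\cap k[X])/\wp(k[X])$, an $n$-dimensional $\mathbb F_p$-vector space, and for $\bar f\in A$ let $\deg\bar f=\min\{\deg(f+\wp(P)):P\in k[X]\}$. Fix an $\mathbb F_p$-basis $\bar f_1,\dots,\bar f_n$ of $A$ with $m_i:=\deg\bar f_i$ such that (a) $p\nmid m_i$, (b) $m_1\le\dots\le m_n$, (c) for all $(\lambda_1,\dots,\lambda_n)\in\mathbb F_p^n\setminus\{0\}$, $\deg(\sum_i\lambda_i\bar f_i)=\max_i\deg(\lambda_i\bar f_i)$. Let $f_i\in k[X]$ be the reduced representative of $\bar f_i$ (so $\deg f_i=m_i$); then $L=k(X,W_1,\dots,W_n)$ with $W_i^p-W_i=f_i(X)$. For every $y\in V$ and every $i$ one has $f_i(X+y)-f_i(X)\equiv\sum_{j=1}^{i-1}\ell_{j,i}(y)f_j(X)\bmod\wp(k[X])$ for uniquely determined maps $\ell_{j,i}:V\to\mathbb F_p$ (the matrix of $\bar f\mapsto\overline{f(X+y)}$ on $A$ in this basis is upper unitriangular with entries $\ell_{j,i}(y)$). *)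

theory Defs
  imports "HOL-Computational_Algebra.Polynomial"
begin

definition Fp :: "'a::field set" where
  "Fp = range of_nat"

definition alg_closed_field :: "'a::field itself \<Rightarrow> bool" where
  "alg_closed_field _ \<longleftrightarrow> (\<forall>q::'a poly. degree q \<ge> 1 \<longrightarrow> (\<exists>x. poly q x = 0))"

definition wp_poly :: "'a::field poly \<Rightarrow> 'a poly" where
  "wp_poly P = P ^ CHAR('a) - P"

definition cong_wp :: "'a::field poly \<Rightarrow> 'a poly \<Rightarrow> bool" where
  "cong_wp f g \<longleftrightarrow> (\<exists>P. f - g = wp_poly P)"

text \<open>Degree of the class of f in k[X]/wp(k[X]): min deg (f + wp(P)).\<close>
definition deg_bar :: "'a::field poly \<Rightarrow> nat" where
  "deg_bar f = (LEAST d. \<exists>P. degree (f + wp_poly P) = d)"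

definition reduced :: "'a::field poly \<Rightarrow> bool" where
  "reduced f \<longleftrightarrow> (\<forall>j. coeff f j \<noteq> 0 \<longrightarrow> \<not> CHAR('a) dvd j)"

definition Fp_subspace :: "'a::field set \<Rightarrow> bool" where
  "Fp_subspace V \<longleftrightarrow> finite V \<and> 0 \<in> V \<and> (\<forall>y\<in>V. \<forall>z\<in>V. y + z \<in> V)
     \<and> (\<forall>c\<in>Fp. \<forall>y\<in>V. c * y \<in> V)"

definition Fp_linear_on :: "'a::field set \<Rightarrow> ('a \<Rightarrow> 'a) \<Rightarrow> bool" where
  "Fp_linear_on V l \<longleftrightarrow> (\<forall>y\<in>V. \<forall>z\<in>V. l (y + z) = l y + l z)
     \<and> (\<forall>c\<in>Fp. \<forall>y\<in>V. l (c * y) = c * l y)"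

end

theory Submission
  imports Defs "HOL-Computational_Algebra.Primes"
begin


lemma Fp_0[simp]: "0 \<in> Fp" unfolding Fp_def by (metis of_nat_0 rangeI)
lemma Fp_1[simp]: "1 \<in> Fp" unfolding Fp_def by (metis of_nat_1 rangeI)
lemma Fp_add: "a \<in> Fp \<Longrightarrow> b \<in> Fp \<Longrightarrow> a + b \<in> Fp"
  unfolding Fp_def by (auto simp flip: of_nat_add)
lemma Fp_mult: "a \<in> Fp \<Longrightarrow> b \<in> Fp \<Longrightarrow> a * b \<in> Fp"
  unfolding Fp_def by (auto simp flip: of_nat_mult)
lemma Fp_power: "a \<in> Fp \<Longrightarrow> a ^ k \<in> Fp"
  by (induct k) (auto intro: Fp_mult)
lemma Fp_uminus:
  assumes "CHAR('a::field) > 0" "(a::'a) \<in> Fp" shows "- a \<in> Fp"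
proof -
  obtain k where a: "a = of_nat k" using assms unfolding Fp_def by auto
  have "of_nat (CHAR('a) * k - k) = (of_nat (CHAR('a) * k) :: 'a) - of_nat k"
    using assms by (intro of_nat_diff) simp
  hence "- a = of_nat (CHAR('a) * k - k)" by (simp add: a)
  thus ?thesis unfolding Fp_def by auto
qed
lemma Fp_diff: "CHAR('a::field) > 0 \<Longrightarrow> (a::'a) \<in> Fp \<Longrightarrow> b \<in> Fp \<Longrightarrow> a - b \<in> Fp"
  using Fp_add Fp_uminus by (metis diff_conv_add_uminus)

lemma Fp_pow_char:
  assumes "prime CHAR('a::field)" "(a::'a) \<in> Fp" shows "a ^ CHAR('a) = a"
proof -
  obtain k where a: "a = of_nat k" using assms unfolding Fp_def by auto
  have "(of_nat k :: 'a) ^ CHAR('a) = of_nat k"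
  proof (induct k)
    case 0 then show ?case using assms prime_gt_0_nat by (simp add: power_0_left)
  next
    case (Suc k) then show ?case
      using freshmans_dream[OF assms(1) refl, where x="of_nat k" and y=1] by (simp add: add.commute)
  qed
  thus ?thesis by (simp add: a)
qed

lemma Fp_inverse:
  assumes "prime CHAR('a::field)" "(a::'a) \<in> Fp" shows "inverse a \<in> Fp"
proof (cases "a = 0")
  case True then show ?thesis by simp
next
  case False
  have p2: "CHAR('a) \<ge> 2" using assms prime_ge_2_nat by blast
  obtain k where k: "CHAR('a) = Suc (Suc k)" using p2 by (metis add_2_eq_Suc le_Suc_ex)
  have "a * (a * a ^ k) = a" using Fp_pow_char[OF assms] k by simp
  hence "a * a ^ k = 1" using False by (metis mult_cancel_left1)
  hence "inverse a = a ^ k" using False by (metis inverse_unique mult.commute)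
  thus ?thesis using Fp_power assms by simp
qed

definition is_wp :: "'a::field poly \<Rightarrow> bool" where "is_wp g \<longleftrightarrow> (\<exists>P. g = wp_poly P)"

lemma wp_add: "prime CHAR('a::field) \<Longrightarrow> wp_poly (P + Q :: 'a poly) = wp_poly P + wp_poly Q"
  unfolding wp_poly_def using freshmans_dream[where x=P and y=Q] by simp
lemma wp_uminus: "prime CHAR('a::field) \<Longrightarrow> wp_poly (- P :: 'a poly) = - wp_poly P"
  unfolding wp_poly_def using minus_power_prime_CHAR[of "CHAR('a poly)" P] by simp
lemma wp_smult: "prime CHAR('a::field) \<Longrightarrow> c \<in> Fp \<Longrightarrow> wp_poly (smult c P :: 'a poly) = smult c (wp_poly P)"
  unfolding wp_poly_def using Fp_pow_char[of c] by (simp add: smult_power smult_diff_right)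
lemma pcompose_power_left': "pcompose (P ^ k) q = (pcompose P q) ^ k"
  by (induct k) (simp_all add: pcompose_1 pcompose_mult)
lemma wp_pcompose: "pcompose (wp_poly P) q = wp_poly (pcompose P q)"
  unfolding wp_poly_def by (simp add: pcompose_diff pcompose_power_left')
lemma wp_0: "prime CHAR('a::field) \<Longrightarrow> wp_poly (0::'a poly) = 0"
  unfolding wp_poly_def using prime_gt_0_nat by (simp add: power_0_left)



definition Wsp :: "(nat \<Rightarrow> 'a::field poly) \<Rightarrow> nat \<Rightarrow> 'a poly set" where
  "Wsp f r = {g. \<exists>\<mu> P. (\<forall>j. \<mu> j \<in> Fp) \<and> g = (\<Sum>j=1..r. smult (\<mu> j) (f j)) + wp_poly P}"

context
  fixes f :: "nat \<Rightarrow> 'a::field poly"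
  assumes cp: "prime CHAR('a)"
begin

lemma cpos: "CHAR('a) > 0" using cp prime_gt_0_nat by blast

lemma W_add: "a \<in> Wsp f r \<Longrightarrow> b \<in> Wsp f r \<Longrightarrow> a + b \<in> Wsp f r"
proof -
  assume "a \<in> Wsp f r" "b \<in> Wsp f r"
  then obtain \<mu> P \<nu> Q where m: "\<forall>j. \<mu> j \<in> Fp" "a = (\<Sum>j=1..r. smult (\<mu> j) (f j)) + wp_poly P"
    and n: "\<forall>j. \<nu> j \<in> Fp" "b = (\<Sum>j=1..r. smult (\<nu> j) (f j)) + wp_poly Q"
    unfolding Wsp_def by blast
  have "a + b = (\<Sum>j=1..r. smult (\<mu> j + \<nu> j) (f j)) + wp_poly (P + Q)"
    using m n by (simp add: wp_add[OF cp] smult_add_left sum.distrib)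
  moreover have "\<forall>j. \<mu> j + \<nu> j \<in> Fp" using m n Fp_add by blast
  ultimately show ?thesis unfolding Wsp_def
    by (intro CollectI exI[of _ "\<lambda>j. \<mu> j + \<nu> j"] exI[of _ "P + Q"]) simp
qed

lemma smult_sum_right: "smult c (sum g A) = (\<Sum>i\<in>A. smult c (g i))"
  by (induct A rule: infinite_finite_induct) (simp_all add: smult_add_right)

lemma W_smult: "c \<in> Fp \<Longrightarrow> a \<in> Wsp f r \<Longrightarrow> smult c a \<in> Wsp f r"
proof -
  assume c: "c \<in> Fp" "a \<in> Wsp f r"
  then obtain \<mu> P where m: "\<forall>j. \<mu> j \<in> Fp" "a = (\<Sum>j=1..r. smult (\<mu> j) (f j)) + wp_poly P"
    unfolding Wsp_def by blast
  have "smult c a = (\<Sum>j=1..r. smult (c * \<mu> j) (f j)) + wp_poly (smult c P)"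
    using m c by (simp add: wp_smult[OF cp] smult_add_right smult_sum_right smult_smult)
  moreover have "\<forall>j. c * \<mu> j \<in> Fp" using m c Fp_mult by blast
  ultimately show ?thesis unfolding Wsp_def
    by (intro CollectI exI[of _ "\<lambda>j. c * \<mu> j"] exI[of _ "smult c P"]) simp
qed

lemma W_uminus: "a \<in> Wsp f r \<Longrightarrow> - a \<in> Wsp f r"
  using W_smult[of "-1" a r] Fp_uminus[OF cpos Fp_1] by simp

lemma W_diff: "a \<in> Wsp f r \<Longrightarrow> b \<in> Wsp f r \<Longrightarrow> a - b \<in> Wsp f r"
  using W_add W_uminus by (metis diff_conv_add_uminus)

lemma W_wp: "wp_poly P \<in> Wsp f r"
  unfolding Wsp_def by (rule CollectI, rule exI[of _ "\<lambda>_. 0"], rule exI[of _ P]) simp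

lemma W_0: "0 \<in> Wsp f r" using W_wp[of 0] wp_0[OF cp] by simp

lemma W_sum: "finite A \<Longrightarrow> (\<And>a. a \<in> A \<Longrightarrow> g a \<in> Wsp f r) \<Longrightarrow> sum g A \<in> Wsp f r"
  by (induct A rule: finite_induct) (auto intro: W_add W_0)

lemma W_f: "1 \<le> j \<Longrightarrow> j \<le> r \<Longrightarrow> f j \<in> Wsp f r"
proof -
  assume j: "1 \<le> j" "j \<le> r"
  have "(\<Sum>k=1..r. smult (if k = j then 1 else 0) (f k)) = (\<Sum>k=1..r. if k = j then f k else 0)"
    by (rule sum.cong) auto
  also have "\<dots> = f j" using j by (subst sum.delta) auto
  finally have "f j = (\<Sum>k=1..r. smult (if k = j then 1 else 0) (f k)) + wp_poly 0"
    by (simp add: wp_0[OF cp])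
  moreover have "\<forall>k. (if k = j then 1 else 0) \<in> (Fp :: 'a set)" by simp
  ultimately show ?thesis unfolding Wsp_def
    by (intro CollectI exI[of _ "\<lambda>k. if k = j then 1 else 0"] exI[of _ 0]) simp
qed

lemma W_mono: "r \<le> r' \<Longrightarrow> Wsp f r \<subseteq> Wsp f r'"
proof
  fix a assume r: "r \<le> r'" and "a \<in> Wsp f r"
  then obtain \<mu> P where m: "\<forall>j. \<mu> j \<in> Fp" "a = (\<Sum>j=1..r. smult (\<mu> j) (f j)) + wp_poly P"
    unfolding Wsp_def by blast
  have "a = (\<Sum>j=1..r. smult (\<mu> j) (f j)) + wp_poly P" by fact
  also have "(\<Sum>j=1..r. smult (\<mu> j) (f j)) \<in> Wsp f r'"
    using r m by (intro W_sum W_smult W_f) auto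
  hence "(\<Sum>j=1..r. smult (\<mu> j) (f j)) + wp_poly P \<in> Wsp f r'" by (intro W_add W_wp)
  finally show "a \<in> Wsp f r'" .
qed

end


lemma deg_bar_wp: "prime CHAR('a::field) \<Longrightarrow> deg_bar (wp_poly (P::'a poly)) = 0"
proof -
  assume cp: "prime CHAR('a)"
  have "degree (wp_poly P + wp_poly (-P)) = 0"
    by (simp add: wp_uminus[OF cp])
  hence "\<exists>Q. degree (wp_poly P + wp_poly Q) = 0" by blast
  thus ?thesis unfolding deg_bar_def by (metis (mono_tags, lifting) Least_eq_0)
qed

context
  fixes n :: nat and V :: "'a::field set" and f :: "nat \<Rightarrow> 'a poly"
    and m :: "nat \<Rightarrow> nat" and ell :: "nat \<Rightarrow> nat \<Rightarrow> 'a \<Rightarrow> 'a"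
  assumes cp: "prime CHAR('a)"
    and V_sub: "Fp_subspace V"
    and m_ndvd: "\<And>i. i \<in> {1..n} \<Longrightarrow> \<not> CHAR('a) dvd m i"
    and deg_comb: "\<And>\<mu>. (\<forall>i\<in>{1..n}. \<mu> i \<in> Fp) \<Longrightarrow> (\<exists>i\<in>{1..n}. \<mu> i \<noteq> 0) \<Longrightarrow>
        deg_bar (\<Sum>i=1..n. smult (\<mu> i) (f i)) = Max {m i | i. i \<in> {1..n} \<and> \<mu> i \<noteq> 0}"
    and ell_Fp: "\<And>j i y. y \<in> V \<Longrightarrow> 1 \<le> j \<Longrightarrow> j < i \<Longrightarrow> i \<le> n \<Longrightarrow> ell j i y \<in> Fp"
    and translation: "\<And>y i. y \<in> V \<Longrightarrow> i \<in> {1..n} \<Longrightarrow>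
        cong_wp (pcompose (f i) [:y, 1:] - f i) (\<Sum>j=1..<i. smult (ell j i y) (f j))"
begin

lemma cpos': "CHAR('a) > 0" using cp prime_gt_0_nat by blast

lemma indep:
  assumes c: "c \<in> Fp" and i: "1 \<le> i" "i \<le> n" and W: "smult c (f i) \<in> Wsp f (i - 1)"
  shows "c = 0"
proof (rule ccontr)
  assume c0: "c \<noteq> 0"
  obtain \<mu> P where m: "\<forall>j. \<mu> j \<in> Fp" "smult c (f i) = (\<Sum>j=1..i-1. smult (\<mu> j) (f j)) + wp_poly P"
    using W unfolding Wsp_def by blast
  define \<nu> where "\<nu> j = (if j = i then c else 0) - (if j < i then \<mu> j else 0)" for j
  have \<nu>Fp: "\<forall>j. \<nu> j \<in> Fp" unfolding \<nu>_def using m c Fp_diff[OF cpos'] by auto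
  have "(\<Sum>j=1..n. smult (\<nu> j) (f j)) =
      (\<Sum>j=1..n. (if j = i then smult c (f j) else 0)) - (\<Sum>j=1..n. (if j < i then smult (\<mu> j) (f j) else 0))"
    unfolding sum_subtractf[symmetric] by (rule sum.cong) (auto simp: \<nu>_def smult_diff_left)
  also have "(\<Sum>j=1..n. (if j = i then smult c (f j) else 0)) = smult c (f i)"
    using i by (subst sum.delta) auto
  also have "(\<Sum>j=1..n. (if j < i then smult (\<mu> j) (f j) else 0)) = (\<Sum>j\<in>{1..n} \<inter> {..<i}. smult (\<mu> j) (f j))"
    by (subst sum.inter_restrict) (auto simp: lessThan_def)
  also have "{1..n} \<inter> {..<i} = {1..i-1}" using i by auto
  finally have eq: "(\<Sum>j=1..n. smult (\<nu> j) (f j)) = wp_poly P" using m by simp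
  have "\<nu> i = c" unfolding \<nu>_def by simp
  hence ex: "\<exists>j\<in>{1..n}. \<nu> j \<noteq> 0" using i c0 by auto
  have "deg_bar (\<Sum>j=1..n. smult (\<nu> j) (f j)) = Max {m j | j. j \<in> {1..n} \<and> \<nu> j \<noteq> 0}"
    using deg_comb[of \<nu>] \<nu>Fp ex by blast
  moreover have "m i \<le> Max {m j | j. j \<in> {1..n} \<and> \<nu> j \<noteq> 0}"
    by (rule Max_ge) (use i c0 \<open>\<nu> i = c\<close> in auto)
  moreover have "m i \<noteq> 0" using m_ndvd[of i] i by (metis atLeastAtMost_iff dvd_0_right)
  ultimately show False using eq deg_bar_wp[OF cp] by simp
qed

lemma trans_sum: "y \<in> V \<Longrightarrow> 1 \<le> j \<Longrightarrow> j \<le> n \<Longrightarrow>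
   \<exists>P. pcompose (f j) [:y, 1:] - f j = (\<Sum>k=1..<j. smult (ell k j y) (f k)) + wp_poly P"
  using translation[of y j] unfolding cong_wp_def by (auto simp: algebra_simps)

lemma H2: "y \<in> V \<Longrightarrow> 1 \<le> j \<Longrightarrow> j \<le> n \<Longrightarrow> pcompose (f j) [:y, 1:] - f j \<in> Wsp f (j - 1)"
proof -
  assume a: "y \<in> V" "1 \<le> j" "j \<le> n"
  obtain P where P: "pcompose (f j) [:y, 1:] - f j = (\<Sum>k=1..<j. smult (ell k j y) (f k)) + wp_poly P"
    using trans_sum a by blast
  have "(\<Sum>k=1..<j. smult (ell k j y) (f k)) \<in> Wsp f (j - 1)"
    using a by (intro W_sum[OF cp] W_smult[OF cp] W_f[OF cp] ell_Fp) auto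
  thus ?thesis unfolding P by (intro W_add[OF cp] W_wp[OF cp])
qed

lemma H3: "y \<in> V \<Longrightarrow> 1 \<le> j \<Longrightarrow> j \<le> r \<Longrightarrow> j \<le> n \<Longrightarrow> pcompose (f j) [:y, 1:] \<in> Wsp f r"
proof -
  assume a: "y \<in> V" "1 \<le> j" "j \<le> r" "j \<le> n"
  have "pcompose (f j) [:y, 1:] - f j \<in> Wsp f r"
    using H2[of y j] subsetD[OF W_mono[where f=f, OF cp, of "j-1" r]] a by auto
  hence "(pcompose (f j) [:y, 1:] - f j) + f j \<in> Wsp f r"
    using W_f[where f=f, OF cp, of j r] a by (intro W_add[OF cp]) auto
  thus ?thesis by simp
qed

lemma H4: "g \<in> Wsp f r \<Longrightarrow> r \<le> n \<Longrightarrow> z \<in> V \<Longrightarrow> pcompose g [:z, 1:] \<in> Wsp f r"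
proof -
  assume a: "g \<in> Wsp f r" "r \<le> n" "z \<in> V"
  then obtain \<mu> P where m: "\<forall>j. \<mu> j \<in> Fp" "g = (\<Sum>j=1..r. smult (\<mu> j) (f j)) + wp_poly P"
    unfolding Wsp_def by blast
  have "pcompose g [:z, 1:] = (\<Sum>j=1..r. smult (\<mu> j) (pcompose (f j) [:z, 1:])) + wp_poly (pcompose P [:z, 1:])"
    unfolding m by (simp add: pcompose_add pcompose_sum pcompose_smult wp_pcompose)
  also have "\<dots> \<in> Wsp f r"
    using a m by (intro W_add[OF cp] W_wp[OF cp] W_sum[OF cp] W_smult[OF cp] H3) auto
  finally show ?thesis .
qed

lemma H5: "y \<in> V \<Longrightarrow> 1 \<le> i \<Longrightarrow> i < n \<Longrightarrow>
  pcompose (f (i+1)) [:y, 1:] - f (i+1) - smult (ell i (i+1) y) (f i) \<in> Wsp f (i - 1)"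
proof -
  assume a: "y \<in> V" "1 \<le> i" "i < n"
  obtain P where P: "pcompose (f (i+1)) [:y, 1:] - f (i+1) = (\<Sum>k=1..<i+1. smult (ell k (i+1) y) (f k)) + wp_poly P"
    using trans_sum[of y "i+1"] a by auto
  have "(\<Sum>k=1..<i+1. smult (ell k (i+1) y) (f k)) = (\<Sum>k=1..<i. smult (ell k (i+1) y) (f k)) + smult (ell i (i+1) y) (f i)"
    using a by simp
  hence eq: "pcompose (f (i+1)) [:y, 1:] - f (i+1) - smult (ell i (i+1) y) (f i) = (\<Sum>k=1..<i. smult (ell k (i+1) y) (f k)) + wp_poly P"
    using P by simp
  have "(\<Sum>k=1..<i. smult (ell k (i+1) y) (f k)) \<in> Wsp f (i - 1)"
    using a by (intro W_sum[OF cp] W_smult[OF cp] W_f[OF cp] ell_Fp) auto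
  thus ?thesis unfolding eq by (intro W_add[OF cp] W_wp[OF cp])
qed

lemma lin_add:
  assumes i: "1 \<le> i" "i < n" and y: "y \<in> V" and z: "z \<in> V"
  shows "ell i (i+1) (y + z) = ell i (i+1) y + ell i (i+1) z"
proof -
  define T where "T w g = pcompose g [:w, 1:]" for w and g :: "'a poly"
  define I where "I = i + 1"
  define R where "R w = T w (f I) - f I - smult (ell i I w) (f i)" for w
  have yz: "y + z \<in> V" using V_sub y z unfolding Fp_subspace_def by blast
  have TT: "T z (T y g) = T (y + z) g" for g
    unfolding T_def by (simp add: pcompose_assoc[symmetric] pcompose_pCons add.commute)
  have key: "smult (ell i I (y + z) - ell i I y - ell i I z) (f i)
      = smult (ell i I y) (T z (f i) - f i) + T z (R y) + R z - R (y + z)"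
    unfolding R_def TT[symmetric] by (simp add: T_def pcompose_diff pcompose_add pcompose_smult algebra_simps smult_diff_left smult_add_left smult_diff_right)
  have a1: "smult (ell i I y) (T z (f i) - f i) \<in> Wsp f (i - 1)"
    using H2[of z i] ell_Fp[of y i I] i z y by (intro W_smult[OF cp]) (auto simp: T_def I_def)
  have a2: "T z (R y) \<in> Wsp f (i - 1)"
    using H5[of y i] H4[of "R y" "i - 1" z] i y z by (auto simp: R_def T_def I_def)
  have a3: "R z \<in> Wsp f (i - 1)" using H5[of z i] i z by (auto simp: R_def T_def I_def)
  have a4: "R (y + z) \<in> Wsp f (i - 1)" using H5[of "y + z" i] i yz by (auto simp: R_def T_def I_def)
  have "smult (ell i I (y + z) - ell i I y - ell i I z) (f i) \<in> Wsp f (i - 1)"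
    unfolding key by (rule W_diff[OF cp, OF W_add[OF cp, OF W_add[OF cp, OF a1 a2] a3] a4])
  hence "ell i I (y + z) - ell i I y - ell i I z = 0"
    using i y z yz ell_Fp[of _ i I]
    by (intro indep[of _ i] Fp_diff[OF cpos']) (auto simp: I_def)
  thus ?thesis by (simp add: I_def algebra_simps)
qed

lemma lin:
  assumes i: "1 \<le> i" "i < n"
  shows "Fp_linear_on V (ell i (i + 1))"
proof -
  have add: "\<forall>y\<in>V. \<forall>z\<in>V. ell i (i+1) (y + z) = ell i (i+1) y + ell i (i+1) z"
    using lin_add i by blast
  have zero: "0 \<in> V" using V_sub unfolding Fp_subspace_def by blast
  have l0: "ell i (i+1) 0 = 0" using add zero by (metis add.right_neutral add_cancel_right_right)
  have "of_nat k * y \<in> V \<and> ell i (i+1) (of_nat k * y) = of_nat k * ell i (i+1) y" if y: "y \<in> V" for k y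
  proof (induct k)
    case 0 then show ?case using zero l0 by simp
  next
    case (Suc k)
    have "of_nat (Suc k) * y = y + of_nat k * y" by (simp add: algebra_simps)
    thus ?case using Suc y add V_sub unfolding Fp_subspace_def by (auto simp: algebra_simps)
  qed
  thus ?thesis unfolding Fp_linear_on_def Fp_def using add by auto
qed

end


lemma roots_Fp:
  assumes cp: "prime CHAR('a::field)" and u: "(u::'a) ^ CHAR('a) = u"
  shows "u \<in> Fp"
proof -
  define p where "p = CHAR('a)"
  have p2: "p \<ge> 2" using cp prime_ge_2_nat p_def by blast
  define Q :: "'a poly" where "Q = monom 1 p - [:0, 1:]"
  have dQ: "degree Q = p" unfolding Q_def using p2
    by (simp only: diff_conv_add_uminus, subst degree_add_eq_left) (auto simp: degree_monom_eq)
  hence Q0: "Q \<noteq> 0" using p2 by auto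
  have rootsQ: "poly Q x = 0 \<longleftrightarrow> x ^ p = x" for x unfolding Q_def by (simp add: poly_monom)
  have inj: "inj_on (of_nat :: nat \<Rightarrow> 'a) {..<p}"
  proof (rule inj_onI)
    fix a b assume ab: "a \<in> {..<p}" "b \<in> {..<p}" "(of_nat a :: 'a) = of_nat b"
    show "a = b"
    proof (rule ccontr)
      assume "a \<noteq> b"
      then consider "a < b" | "b < a" by linarith
      thus False
      proof cases
        case 1
        have "(of_nat (b - a) :: 'a) = 0" using ab 1 by (simp add: of_nat_diff)
        hence "p dvd (b - a)" using of_nat_eq_0_iff_char_dvd p_def by blast
        thus False using 1 ab by (auto dest: dvd_imp_le)
      next
        case 2
        have "(of_nat (a - b) :: 'a) = 0" using ab 2 by (simp add: of_nat_diff)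
        hence "p dvd (a - b)" using of_nat_eq_0_iff_char_dvd p_def by blast
        thus False using 2 ab by (auto dest: dvd_imp_le)
      qed
    qed
  qed
  have sub: "of_nat ` {..<p} \<subseteq> {x. poly Q x = 0}"
    using Fp_pow_char[OF cp] unfolding rootsQ p_def Fp_def by auto
  have fin: "finite {x. poly Q x = 0}" using poly_roots_finite[OF Q0] .
  have "card {x. poly Q x = 0} \<le> card (of_nat ` {..<p} :: 'a set)"
    using card_poly_roots_bound[OF Q0] dQ card_image[OF inj] by simp
  hence "of_nat ` {..<p} = {x. poly Q x = 0}"
    using card_subset_eq[OF fin sub] card_mono[OF fin sub] by linarith
  moreover have "u \<in> {x. poly Q x = 0}" using u rootsQ p_def by simp
  ultimately show ?thesis unfolding Fp_def by auto
qed

lemma part2: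
  fixes V :: "'a::field set" and l :: "'a \<Rightarrow> 'a"
  assumes cp: "prime CHAR('a)" and V_sub: "Fp_subspace V" and lin: "Fp_linear_on V l"
    and lFp: "\<forall>y\<in>V. l y \<in> Fp" and y0: "y0 \<in> V" "l y0 \<noteq> 0"
  shows "let K = {y \<in> V. l y = 0}; L = (\<Prod>y\<in>K. [:- y, 1:])
         in \<exists>c. c \<noteq> 0 \<and> (\<forall>y\<in>V. l y = c * poly L y)
                   \<and> V = {x. poly (smult (c ^ CHAR('a)) (L ^ CHAR('a)) - smult c L) x = 0}"
proof -
  define K where "K = {y \<in> V. l y = 0}"
  define L where "L = (\<Prod>y\<in>K. [:- y, 1:])"
  have cpos: "CHAR('a) > 0" using cp prime_gt_0_nat by blast
  have finV: "finite V" and V0: "0 \<in> V" and Vadd: "\<And>y z. y \<in> V \<Longrightarrow> z \<in> V \<Longrightarrow> y + z \<in> V"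
    and Vsm: "\<And>c y. c \<in> Fp \<Longrightarrow> y \<in> V \<Longrightarrow> c * y \<in> V"
    using V_sub unfolding Fp_subspace_def by auto
  have ladd: "\<And>y z. y \<in> V \<Longrightarrow> z \<in> V \<Longrightarrow> l (y + z) = l y + l z"
    and lsm: "\<And>c y. c \<in> Fp \<Longrightarrow> y \<in> V \<Longrightarrow> l (c * y) = c * l y"
    using lin unfolding Fp_linear_on_def by auto
  have m1: "(-1::'a) \<in> Fp" using Fp_uminus[OF cpos Fp_1] .
  have Vneg: "y \<in> V \<Longrightarrow> - y \<in> V" for y using Vsm[OF m1] by fastforce
  have lneg: "y \<in> V \<Longrightarrow> l (- y) = - l y" for y using lsm[OF m1] by fastforce
  have l0: "l 0 = 0" using ladd[OF V0 V0] by (metis add_cancel_right_right add.right_neutral)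
  have finK: "finite K" unfolding K_def using finV by simp
  have K0: "0 \<in> K" unfolding K_def using V0 l0 by simp
  have KV: "K \<subseteq> V" unfolding K_def by auto
  have Kneg: "k \<in> K \<Longrightarrow> - k \<in> K" for k unfolding K_def using Vneg lneg by auto
  have polyL: "poly L x = (\<Prod>y\<in>K. x - y)" for x unfolding L_def by (simp add: poly_prod)
  have rootL: "poly L x = 0 \<longleftrightarrow> x \<in> K" for x unfolding polyL using finK by simp
  have shift: "poly L (x + k) = poly L x" if k: "k \<in> K" for x k
  proof -
    have "(\<Prod>y\<in>K. x + k - y) = (\<Prod>y\<in>K. x - y)"
    proof (rule prod.reindex_bij_witness[of K "\<lambda>b. b + k" "\<lambda>a. a - k"])
      fix a assume "a \<in> K" thus "a - k \<in> K" using k Kneg unfolding K_def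
        by (metis (mono_tags, lifting) diff_conv_add_uminus ladd mem_Collect_eq add.right_neutral Vadd)
    next
      fix b assume "b \<in> K" thus "b + k \<in> K" using k unfolding K_def using ladd Vadd by auto
    qed (auto simp: algebra_simps)
    thus ?thesis unfolding polyL .
  qed
  have cardK: "card K > 0" using finK K0 card_gt_0_iff by blast
  have degL: "degree L = card K" unfolding L_def
    by (subst degree_prod_eq_sum_degree) auto
  have lcL: "lead_coeff L = 1" unfolding L_def by (simp add: lead_coeff_prod)
  have Ladd: "poly L (x + z) = poly L x + poly L z" for x z
  proof -
    have "pcompose L [:z, 1:] = L + [:poly L z:]"
    proof (rule poly_eqI_degree_lead_coeff[where n = "card K" and A = K])
      have "coeff (pcompose L [:z, 1:]) (card K) = lead_coeff (pcompose L [:z, 1:])"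
        by (simp add: degree_pcompose degL)
      also have "\<dots> = 1" by (subst lead_coeff_comp) (auto simp: lcL)
      also have "1 = coeff (L + [:poly L z:]) (card K)"
        using cardK lcL degL by (simp add: coeff_pCons split: nat.splits)
      finally show "coeff (pcompose L [:z, 1:]) (card K) = coeff (L + [:poly L z:]) (card K)" .
      show "card K \<le> card K" by simp
      show "degree (pcompose L [:z, 1:]) \<le> card K" by (simp add: degree_pcompose degL)
      show "degree (L + [:poly L z:]) \<le> card K"
        using degree_add_le[of L "card K" "[:poly L z:]"] degL by simp
      fix k assume "k \<in> K"
      thus "poly (pcompose L [:z, 1:]) k = poly (L + [:poly L z:]) k"
        using shift[of k z] rootL[of k] by (simp add: poly_pcompose add.commute)
    qed
    hence "poly (pcompose L [:z, 1:]) x = poly (L + [:poly L z:]) x" by simp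
    thus ?thesis by (simp add: poly_pcompose add.commute)
  qed
  have L0: "poly L 0 = 0" using rootL K0 by simp
  have Lneg: "poly L (- x) = - poly L x" for x using Ladd[of x "-x"] L0 by (simp add: eq_neg_iff_add_eq_0 add.commute)
  have Ldiff: "poly L (x - y) = poly L x - poly L y" for x y
    using Ladd[of x "-y"] Lneg[of y] by simp
  have Lsm: "poly L (c * x) = c * poly L x" if c: "c \<in> Fp" for c x
  proof -
    obtain k where "c = of_nat k" using c unfolding Fp_def by auto
    moreover have "poly L (of_nat k * x) = of_nat k * poly L x"
      by (induct k) (simp_all add: L0 algebra_simps Ladd)
    ultimately show ?thesis by simp
  qed
  define s where "s = l y0"
  define a where "a = poly L y0"
  have s0: "s \<noteq> 0" using y0 s_def by simp
  have sFp: "s \<in> Fp" using lFp y0 s_def by simp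
  have a0: "a \<noteq> 0" using rootL[of y0] y0 unfolding a_def K_def by simp
  define c where "c = s / a"
  have c0: "c \<noteq> 0" using s0 a0 c_def by simp
  have lL: "l y = c * poly L y" if y: "y \<in> V" for y
  proof -
    define t where "t = l y"
    have tFp: "t \<in> Fp" using lFp y t_def by simp
    have mt: "- t \<in> Fp" using Fp_uminus[OF cpos tFp] .
    define y' where "y' = s * y + (- t) * y0"
    have y'V: "y' \<in> V" unfolding y'_def using Vadd Vsm sFp mt y y0 by blast
    have "l y' = l (s * y) + l ((- t) * y0)"
      unfolding y'_def using ladd Vsm sFp mt y y0 by blast
    also have "\<dots> = s * t + (- t) * s" using lsm[OF sFp y] lsm[OF mt y0(1)] t_def s_def by simp
    finally have "l y' = s * t + (- t) * s" .
    hence "y' \<in> K" unfolding K_def using y'V by (simp add: algebra_simps)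
    hence "poly L y' = 0" using rootL by simp
    moreover have "poly L y' = s * poly L y + (- t) * a"
      unfolding y'_def a_def using Ldiff[of "s * y" "t * y0"] Lsm[OF sFp] Lsm[OF tFp] by simp
    ultimately have "s * poly L y - t * a = 0" by simp
    thus ?thesis using a0 unfolding c_def t_def by (simp add: field_simps)
  qed
  have Veq: "V = {x. poly (smult (c ^ CHAR('a)) (L ^ CHAR('a)) - smult c L) x = 0}"
  proof (intro set_eqI iffI)
    fix x assume x: "x \<in> V"
    have "(c * poly L x) ^ CHAR('a) = c * poly L x"
      using lL[OF x] lFp x Fp_pow_char[OF cp] by metis
    thus "x \<in> {x. poly (smult (c ^ CHAR('a)) (L ^ CHAR('a)) - smult c L) x = 0}"
      by (simp add: poly_power power_mult_distrib)
  next
    fix x assume "x \<in> {x. poly (smult (c ^ CHAR('a)) (L ^ CHAR('a)) - smult c L) x = 0}"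
    hence "(c * poly L x) ^ CHAR('a) = c * poly L x"
      by (simp add: poly_power power_mult_distrib)
    hence uFp: "c * poly L x \<in> Fp" using roots_Fp[OF cp] by blast
    define u where "u = c * poly L x"
    define w where "w = (u * inverse s) * y0"
    have uis: "u * inverse s \<in> Fp" using uFp Fp_inverse[OF cp sFp] Fp_mult u_def by blast
    have wV: "w \<in> V" unfolding w_def using Vsm uis y0 by blast
    have "c * poly L w = u * inverse s * (c * poly L y0)" unfolding w_def using Lsm[OF uis] by simp
    also have "c * poly L y0 = s" using lL[OF y0(1)] s_def by simp
    finally have "c * poly L w = u" using s0 by simp
    hence "poly L x = poly L w" using c0 u_def by simp
    hence "poly L (x - w) = 0" using Ldiff by simp
    hence "x - w \<in> V" using rootL KV by auto
    hence "(x - w) + w \<in> V" using Vadd wV by blast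
    thus "x \<in> V" by simp
  qed
  show ?thesis unfolding Let_def K_def[symmetric] L_def[symmetric]
    using c0 lL Veq by blast
qed


theorem proposition2p9:
  fixes p n :: nat
    and V :: "'a::field set"
    and f :: "nat \<Rightarrow> 'a poly"
    and m :: "nat \<Rightarrow> nat"
    and ell :: "nat \<Rightarrow> nat \<Rightarrow> 'a \<Rightarrow> 'a"
  assumes alg_closed: "alg_closed_field TYPE('a)"
    and char: "CHAR('a) = p" and p_prime: "prime p"
    and n_ge: "n \<ge> 2"
    and V_sub: "Fp_subspace V"
    and f_reduced: "\<And>i. i \<in> {1..n} \<Longrightarrow> reduced (f i)"
    and m_def: "\<And>i. i \<in> {1..n} \<Longrightarrow> m i = deg_bar (f i) \<and> degree (f i) = m i"
    and m_ndvd: "\<And>i. i \<in> {1..n} \<Longrightarrow> \<not> p dvd m i"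
    and m_mono: "\<And>i j. i \<in> {1..n} \<Longrightarrow> j \<in> {1..n} \<Longrightarrow> i \<le> j \<Longrightarrow> m i \<le> m j"
    and deg_comb: "\<And>\<mu>. (\<forall>i\<in>{1..n}. \<mu> i \<in> Fp) \<Longrightarrow> (\<exists>i\<in>{1..n}. \<mu> i \<noteq> 0) \<Longrightarrow>
        deg_bar (\<Sum>i=1..n. smult (\<mu> i) (f i)) = Max {m i | i. i \<in> {1..n} \<and> \<mu> i \<noteq> 0}"
    and ell_Fp: "\<And>j i y. y \<in> V \<Longrightarrow> 1 \<le> j \<Longrightarrow> j < i \<Longrightarrow> i \<le> n \<Longrightarrow> ell j i y \<in> Fp"
    and translation: "\<And>y i. y \<in> V \<Longrightarrow> i \<in> {1..n} \<Longrightarrow>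
        cong_wp (pcompose (f i) [:y, 1:] - f i) (\<Sum>j=1..<i. smult (ell j i y) (f j))"
  shows "(\<forall>i\<in>{1..<n}. Fp_linear_on V (ell i (i + 1)))
       \<and> (\<forall>i\<in>{1..<n}. (\<exists>y\<in>V. ell i (i + 1) y \<noteq> 0) \<longrightarrow>
            (let K = {y \<in> V. ell i (i + 1) y = 0};
                 L = (\<Prod>y\<in>K. [:- y, 1:])
             in \<exists>c. c \<noteq> 0 \<and> (\<forall>y\<in>V. ell i (i + 1) y = c * poly L y)
                   \<and> V = {x. poly (smult (c ^ p) (L ^ p) - smult c L) x = 0}))"
  proof -
  have cp: "prime CHAR('a)" using char p_prime by simp
  have mnd: "\<And>i. i \<in> {1..n} \<Longrightarrow> \<not> CHAR('a) dvd m i" using m_ndvd char by simp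
  have L: "Fp_linear_on V (ell i (i + 1))" if i: "i \<in> {1..<n}" for i
    using lin[OF cp V_sub mnd deg_comb ell_Fp translation] i by auto
  show ?thesis
  proof (intro conjI ballI impI)
    fix i assume "i \<in> {1..<n}" thus "Fp_linear_on V (ell i (i + 1))" by (rule L)
  next
    fix i assume i: "i \<in> {1..<n}" and ex: "\<exists>y\<in>V. ell i (i + 1) y \<noteq> 0"
    then obtain y0 where y0: "y0 \<in> V" "ell i (i + 1) y0 \<noteq> 0" by blast
    have lFp: "\<forall>y\<in>V. ell i (i + 1) y \<in> Fp" using ell_Fp i by auto
    show "let K = {y \<in> V. ell i (i + 1) y = 0};
                 L = (\<Prod>y\<in>K. [:- y, 1:])
             in \<exists>c. c \<noteq> 0 \<and> (\<forall>y\<in>V. ell i (i + 1) y = c * poly L y)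
                   \<and> V = {x. poly (smult (c ^ p) (L ^ p) - smult c L) x = 0}"
      using part2[OF cp V_sub L[OF i] lFp y0] unfolding char .
  qed
qed

end
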